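(* Let $m\ge1$, let $k_1,k_2\ge0$ be integers and $r_1,r_2>0$ with $r_1^2+r_2^2=1$. Let $F_1:\mathbb{R}^{m+1}\to\mathbb{R}^{n_1+1}$ and $F_2:\mathbb{R}^{m+1}\to\mathbb{R}^{n_2+1}$ be harmonic forms of degrees $k_1$, $k_2$ (each component a harmonic homogeneous polynomial of that degree) with $|F_i(\bar x)|^2=r_i^2|\bar x|^{2k_i}$, restricting to $\varphi_1:\mathbb{S}^m\to\mathbb{S}^{n_1}(r_1)$, $\varphi_2:\mathbb{S}^m\to\mathbb{S}^{n_2}(r_2)$, and let $\varphi=\iota\circ(\varphi_1,\varphi_2):\mathbb{S}^m\to\mathbb{S}^{n_1+n_2+1}$, where $\iota$ is the canonical inclusion of $\mathbb{S}^{n_1}(r_1)\times\mathbb{S}^{n_2}(r_2)$ into $\mathbb{S}^{n_1+n_2+1}$. Then $\varphi$ is proper biharmonic if and only if $r_1=r_2=1/\sqrt2$ and $k_1\neq k_2$.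
   Context: $\mathbb{S}^n(r)$ is the sphere of radius $r$ centred at $0$, $\mathbb{S}^m$ the unit sphere. Tension field $\tau(\varphi)=\operatorname{trace}\nabla d\varphi$; bitension field $\tau_2(\varphi)=-\Delta\tau(\varphi)-\operatorname{trace}R^N(d\varphi(\cdot),\tau(\varphi))d\varphi(\cdot)$ with $\Delta=-\operatorname{trace}\nabla^2$. Proper biharmonic means $\tau_2(\varphi)=0$ but $\tau(\varphi)\neq0$. *)

theory Defs
  imports "HOL-Analysis.Analysis"
begin

text \<open>The domain is the unit sphere
  S^m = sphere 0 1 in a Euclidean space 'a with DIM('a) = m+1.  The target
  S^(n1+n2+1) is the unit sphere in the product space 'b \<times> 'c, where
  DIM('b) = n1+1 and DIM('c) = n2+1.  Riemannian notions for a map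
  phi from S^m into the unit sphere of the target are written out via the
  ambient space: the Levi-Civita connection of the target sphere is the
  tangential projection of the ambient derivative, and the traces of the
  second covariant derivatives are evaluated along geodesics of S^m issued in
  the directions of an orthonormal basis of the tangent space.\<close>

definition tproj :: "'b::real_inner \<Rightarrow> 'b \<Rightarrow> 'b" where
  "tproj p v = v - (v \<bullet> p) *\<^sub>R p"

definition geod :: "'a::real_vector \<Rightarrow> 'a \<Rightarrow> real \<Rightarrow> 'a" where
  "geod x e t = cos t *\<^sub>R x + sin t *\<^sub>R e"

definition tangent_onb :: "'a::euclidean_space \<Rightarrow> 'a set" where
  "tangent_onb x = (SOME B. B \<subseteq> {e. e \<bullet> x = 0} \<and> pairwise orthogonal B \<and>
      (\<forall>e\<in>B. norm e = 1) \<and> span B = {e. e \<bullet> x = 0})"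

definition dmap :: "('a::euclidean_space \<Rightarrow> 'b::real_normed_vector) \<Rightarrow> 'a \<Rightarrow> 'a \<Rightarrow> 'b" where
  "dmap phi x e = vector_derivative (\<lambda>t. phi (geod x e t)) (at 0)"

definition second_along :: "('a::euclidean_space \<Rightarrow> 'b::real_normed_vector) \<Rightarrow> 'a \<Rightarrow> 'a \<Rightarrow> 'b" where
  "second_along phi x e =
     vector_derivative (\<lambda>t. vector_derivative (\<lambda>s. phi (geod x e s)) (at t)) (at 0)"

definition tension :: "('a::euclidean_space \<Rightarrow> 'b::real_inner) \<Rightarrow> 'a \<Rightarrow> 'b" where
  "tension phi x = (\<Sum>e\<in>tangent_onb x. tproj (phi x) (second_along phi x e))"

definition covd_along :: "('a::euclidean_space \<Rightarrow> 'b::real_inner) \<Rightarrow> ('a \<Rightarrow> 'b) \<Rightarrow> 'a \<Rightarrow> 'a \<Rightarrow> real \<Rightarrow> 'b" where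
  "covd_along phi V x e t =
     tproj (phi (geod x e t)) (vector_derivative (\<lambda>s. V (geod x e s)) (at t))"

text \<open>trace (nabla^phi)^2 V, i.e. minus the rough Laplacian.\<close>
definition rough_trace :: "('a::euclidean_space \<Rightarrow> 'b::real_inner) \<Rightarrow> ('a \<Rightarrow> 'b) \<Rightarrow> 'a \<Rightarrow> 'b" where
  "rough_trace phi V x =
     (\<Sum>e\<in>tangent_onb x. tproj (phi x) (vector_derivative (covd_along phi V x e) (at 0)))"

definition sphere_curv :: "'b::real_inner \<Rightarrow> 'b \<Rightarrow> 'b \<Rightarrow> 'b" where
  "sphere_curv u v w = (v \<bullet> w) *\<^sub>R u - (u \<bullet> w) *\<^sub>R v"

text \<open>Bitension field tau_2 = - Delta tau - trace R(d phi, tau) d phi, with Delta = - trace nabla^2.\<close>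
definition bitension :: "('a::euclidean_space \<Rightarrow> 'b::real_inner) \<Rightarrow> 'a \<Rightarrow> 'b" where
  "bitension phi x = rough_trace phi (tension phi) x
     - (\<Sum>e\<in>tangent_onb x. sphere_curv (dmap phi x e) (tension phi x) (dmap phi x e))"

definition proper_biharmonic :: "('a::euclidean_space \<Rightarrow> 'b::real_inner) \<Rightarrow> bool" where
  "proper_biharmonic phi \<longleftrightarrow>
     (\<forall>x\<in>sphere 0 1. bitension phi x = 0) \<and> \<not> (\<forall>x\<in>sphere 0 1. tension phi x = 0)"

definition homogeneous_deg :: "nat \<Rightarrow> ('a::real_vector \<Rightarrow> real) \<Rightarrow> bool" where
  "homogeneous_deg k f \<longleftrightarrow> (\<forall>t x. f (t *\<^sub>R x) = t ^ k * f x)"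

definition euclid_laplacian :: "('a::euclidean_space \<Rightarrow> real) \<Rightarrow> 'a \<Rightarrow> real" where
  "euclid_laplacian f x = (\<Sum>b\<in>Basis. deriv (\<lambda>t. deriv (\<lambda>s. f (x + s *\<^sub>R b)) t) 0)"

definition harmonic_form :: "nat \<Rightarrow> ('a::euclidean_space \<Rightarrow> 'b::euclidean_space) \<Rightarrow> bool" where
  "harmonic_form k F \<longleftrightarrow> (\<forall>b\<in>Basis.
      real_polynomial_function (\<lambda>x. F x \<bullet> b) \<and> homogeneous_deg k (\<lambda>x. F x \<bullet> b) \<and>
      (\<forall>x. euclid_laplacian (\<lambda>y. F y \<bullet> b) x = 0))"

end

theory Submission
  imports Defs
begin

lemma poly_deriv_ex:
  assumes "real_polynomial_function (p :: 'a::real_normed_vector \<Rightarrow> real)"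
  shows "\<exists>D. (\<forall>y. (p has_derivative D y) (at y)) \<and> (\<forall>v. real_polynomial_function (\<lambda>y. D y v))"
  using assms
proof (induction rule: real_polynomial_function.induct)
  case (linear f)
  then show ?case
    by (intro exI[of _ "\<lambda>y. f"]) (auto intro: bounded_linear_imp_has_derivative)
next
  case (const c)
  then show ?case by (intro exI[of _ "\<lambda>y v. 0"]) auto
next
  case (add f g)
  then obtain Df Dg where f: "\<forall>y. (f has_derivative Df y) (at y)" "\<forall>v. real_polynomial_function (\<lambda>y. Df y v)"
    and g: "\<forall>y. (g has_derivative Dg y) (at y)" "\<forall>v. real_polynomial_function (\<lambda>y. Dg y v)" by blast
  show ?case
    by (intro exI[of _ "\<lambda>y v. Df y v + Dg y v"]) (use f g in \<open>auto intro: has_derivative_add\<close>)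
next
  case (mult f g)
  then obtain Df Dg where f: "\<forall>y. (f has_derivative Df y) (at y)" "\<forall>v. real_polynomial_function (\<lambda>y. Df y v)"
    and g: "\<forall>y. (g has_derivative Dg y) (at y)" "\<forall>v. real_polynomial_function (\<lambda>y. Dg y v)" by blast
  have "real_polynomial_function (\<lambda>y. f y * Dg y v + Df y v * g y)" for v
    using f(2) g(2) mult.hyps
    by (intro real_polynomial_function.intros(3) real_polynomial_function.intros(4)) auto
  then show ?case
    by (intro exI[of _ "\<lambda>y v. f y * Dg y v + Df y v * g y"])
       (use f g in \<open>auto intro!: has_derivative_mult\<close>)
qed

lemma onb_inner:
  assumes "pairwise orthogonal B" "\<forall>e\<in>B. norm e = 1" "e \<in> B" "e' \<in> B"
  shows "e \<bullet> e' = (if e = e' then 1 else 0)"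
  using assms by (auto simp: pairwise_def orthogonal_def norm_eq_1)

lemma onb_expand:
  fixes v :: "'a::euclidean_space"
  assumes "finite B" "pairwise orthogonal B" "\<forall>e\<in>B. norm e = 1" "v \<in> span B"
  shows "v = (\<Sum>e\<in>B. (v \<bullet> e) *\<^sub>R e)"
proof -
  obtain c where c: "v = (\<Sum>e\<in>B. c e *\<^sub>R e)"
    using assms(4) span_finite[OF assms(1)] by auto
  have "v \<bullet> e' = c e'" if "e' \<in> B" for e'
  proof -
    have "v \<bullet> e' = (\<Sum>e\<in>B. c e * (e \<bullet> e'))"
      by (simp add: c inner_sum_left)
    also have "\<dots> = (\<Sum>e\<in>B. if e = e' then c e else 0)"
      by (rule sum.cong) (use onb_inner[OF assms(2,3)] that in auto)
    also have "\<dots> = c e'" using assms(1) that by simp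
    finally show ?thesis .
  qed
  then show ?thesis by (simp add: c cong: sum.cong)
qed

lemma trace_onb:
  fixes H :: "'a::euclidean_space \<Rightarrow> 'a \<Rightarrow> real"
  assumes lin1: "\<And>v. linear (H v)" and lin2: "\<And>w. linear (\<lambda>v. H v w)"
    and B: "finite B" "pairwise orthogonal B" "\<forall>e\<in>B. norm e = 1" "span B = UNIV"
  shows "(\<Sum>b\<in>Basis. H b b) = (\<Sum>e\<in>B. H e e)"
proof -
  have exp: "v = (\<Sum>e\<in>B. (v \<bullet> e) *\<^sub>R e)" for v
    by (rule onb_expand) (use B in auto)
  have Hexp: "H v w = (\<Sum>e\<in>B. \<Sum>e'\<in>B. (v \<bullet> e) * (w \<bullet> e') * H e e')" for v w
  proof -
    have "H v w = H (\<Sum>e\<in>B. (v \<bullet> e) *\<^sub>R e) (\<Sum>e'\<in>B. (w \<bullet> e') *\<^sub>R e')"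
      by (simp only: exp[of v, symmetric] exp[of w, symmetric])
    also have "\<dots> = (\<Sum>e\<in>B. (v \<bullet> e) * H e (\<Sum>e'\<in>B. (w \<bullet> e') *\<^sub>R e'))"
      using linear_sum[OF lin2, of "\<lambda>e. (v \<bullet> e) *\<^sub>R e" B]
      by (simp add: o_def linear_scale[OF lin2])
    also have "\<dots> = (\<Sum>e\<in>B. \<Sum>e'\<in>B. (v \<bullet> e) * (w \<bullet> e') * H e e')"
      by (simp add: linear_sum[OF lin1] o_def linear_scale[OF lin1] sum_distrib_left mult.assoc)
    finally show ?thesis .
  qed
  have "(\<Sum>b\<in>Basis. H b b) = (\<Sum>b\<in>Basis. \<Sum>e\<in>B. \<Sum>e'\<in>B. (b \<bullet> e) * (b \<bullet> e') * H e e')"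
    by (rule sum.cong[OF refl], rule Hexp)
  also have "\<dots> = (\<Sum>e\<in>B. \<Sum>e'\<in>B. (\<Sum>b\<in>Basis. (e \<bullet> b) * (e' \<bullet> b)) * H e e')"
  proof -
    have "(\<Sum>b\<in>Basis. \<Sum>e\<in>B. \<Sum>e'\<in>B. (b \<bullet> e) * (b \<bullet> e') * H e e')
        = (\<Sum>e\<in>B. \<Sum>b\<in>Basis. \<Sum>e'\<in>B. (b \<bullet> e) * (b \<bullet> e') * H e e')"
      by (rule sum.swap)
    also have "\<dots> = (\<Sum>e\<in>B. \<Sum>e'\<in>B. \<Sum>b\<in>Basis. (b \<bullet> e) * (b \<bullet> e') * H e e')"
      by (intro sum.cong refl sum.swap)
    also have "\<dots> = (\<Sum>e\<in>B. \<Sum>e'\<in>B. (\<Sum>b\<in>Basis. (e \<bullet> b) * (e' \<bullet> b)) * H e e')"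
      by (intro sum.cong refl) (simp add: sum_distrib_right inner_commute)
    finally show ?thesis .
  qed
  also have "\<dots> = (\<Sum>e\<in>B. \<Sum>e'\<in>B. (e \<bullet> e') * H e e')"
    by (simp add: euclidean_inner[symmetric])
  also have "\<dots> = (\<Sum>e\<in>B. \<Sum>e'\<in>B. if e' = e then H e e else 0)"
    by (intro sum.cong refl) (use onb_inner[OF B(2,3)] in auto)
  also have "\<dots> = (\<Sum>e\<in>B. H e e)" using B(1) by simp
  finally show ?thesis .
qed

lemma tangent_onb_props:
  fixes x :: "'a::euclidean_space"
  assumes "x \<noteq> 0"
  shows "tangent_onb x \<subseteq> {e. e \<bullet> x = 0}" "pairwise orthogonal (tangent_onb x)"
    "\<forall>e\<in>tangent_onb x. norm e = 1" "span (tangent_onb x) = {e. e \<bullet> x = 0}"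
    "finite (tangent_onb x)" "card (tangent_onb x) = DIM('a) - 1"
proof -
  let ?P = "\<lambda>B. B \<subseteq> {e. e \<bullet> x = 0} \<and> pairwise orthogonal B \<and>
      (\<forall>e\<in>B. norm e = 1) \<and> span B = {e. e \<bullet> x = 0}"
  have "\<exists>B. ?P B"
    by (rule orthonormal_basis_subspace[OF subspace_hyperplane2[of x]]) blast
  then have P: "?P (tangent_onb x)"
    unfolding tangent_onb_def by (rule someI_ex)
  then show "tangent_onb x \<subseteq> {e. e \<bullet> x = 0}" "pairwise orthogonal (tangent_onb x)"
    "\<forall>e\<in>tangent_onb x. norm e = 1" "span (tangent_onb x) = {e. e \<bullet> x = 0}" by auto
  have ind: "independent (tangent_onb x)"
    using P by (intro pairwise_orthogonal_independent) auto
  then show "finite (tangent_onb x)" by (rule independent_imp_finite)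
  have "card (tangent_onb x) = dim (span (tangent_onb x))"
    using dim_span_eq_card_independent[OF ind] by simp
  also have "\<dots> = dim {e. x \<bullet> e = 0}" using P by (simp add: inner_commute)
  also have "\<dots> = DIM('a) - 1" using dim_hyperplane[OF assms] .
  finally show "card (tangent_onb x) = DIM('a) - 1" .
qed

lemma geod_vd: "(geod x e has_vector_derivative (- sin t *\<^sub>R x + cos t *\<^sub>R e)) (at t)"
  unfolding geod_def
  by (auto intro!: derivative_eq_intros)

lemma geod_0[simp]: "geod x e 0 = x"
  by (simp add: geod_def)

lemma chain_curve:
  fixes g :: "'a::real_normed_vector \<Rightarrow> real"
  assumes g: "\<And>y. (g has_derivative G y) (at y)"
    and c: "(c has_vector_derivative c') (at t)"
  shows "((\<lambda>t. g (c t)) has_real_derivative G (c t) c') (at t)"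
proof -
  have cd: "(c has_derivative (\<lambda>h. h *\<^sub>R c')) (at t)"
    using c by (simp add: has_vector_derivative_def)
  have "((g \<circ> c) has_derivative (G (c t) \<circ> (\<lambda>h. h *\<^sub>R c'))) (at t)"
    by (rule diff_chain_at[OF cd g])
  moreover have "G (c t) \<circ> (\<lambda>h. h *\<^sub>R c') = (*) (G (c t) c')"
  proof
    fix h
    have "linear (G (c t))" using g[of "c t"] has_derivative_bounded_linear bounded_linear.linear by blast
    then show "(G (c t) \<circ> (\<lambda>h. h *\<^sub>R c')) h = G (c t) c' * h"
      by (simp add: linear_scale)
  qed
  ultimately show ?thesis
    by (simp add: has_field_derivative_def o_def mult.commute)
qed

lemma line_vd: "((\<lambda>t. a + t *\<^sub>R v) has_vector_derivative v) (at t)"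
  by (auto intro!: derivative_eq_intros)

lemma poly_geod:
  fixes p :: "'a::euclidean_space \<Rightarrow> real"
  assumes rpf: "real_polynomial_function p" and hom: "homogeneous_deg k p"
    and harm: "\<forall>y. euclid_laplacian p y = 0"
  shows "\<exists>f1 s. (\<forall>x e t. ((\<lambda>t. p (geod x e t)) has_real_derivative f1 x e t) (at t)) \<and>
     (\<forall>x e. (f1 x e has_real_derivative s x e) (at 0)) \<and>
     (\<forall>x. norm x = 1 \<longrightarrow> (\<Sum>e\<in>tangent_onb x. s x e) = - (real k * (real k + real DIM('a) - 2)) * p x)"
proof -
  obtain D where D: "\<And>y. (p has_derivative D y) (at y)" and Dp: "\<And>v. real_polynomial_function (\<lambda>y. D y v)"
    using poly_deriv_ex[OF rpf] by blast
  have "\<forall>v. \<exists>D2v. \<forall>y. ((\<lambda>y. D y v) has_derivative D2v y) (at y)"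
    using poly_deriv_ex[OF Dp] by blast
  then obtain D2 where D2: "\<And>v y. ((\<lambda>y. D y v) has_derivative D2 v y) (at y)"
    by metis
  have linD: "linear (D y)" for y
    using D[of y] has_derivative_bounded_linear bounded_linear.linear by blast
  have linD2: "linear (D2 v y)" for v y
    using D2[of v y] has_derivative_bounded_linear bounded_linear.linear by blast
  have D2add: "D2 (v1 + v2) y = (\<lambda>w. D2 v1 y w + D2 v2 y w)" for v1 v2 y
  proof -
    have "((\<lambda>z. D z (v1 + v2)) has_derivative (\<lambda>w. D2 v1 y w + D2 v2 y w)) (at y)"
      using has_derivative_add[OF D2[of v1 y] D2[of v2 y]] by (simp add: linear_add[OF linD])
    then show ?thesis using D2[of "v1 + v2" y] has_derivative_unique by blast
  qed
  have D2scale: "D2 (c *\<^sub>R v) y = (\<lambda>w. c * D2 v y w)" for c v y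
  proof -
    have "((\<lambda>z. D z (c *\<^sub>R v)) has_derivative (\<lambda>w. c * D2 v y w)) (at y)"
      using has_derivative_mult_right[OF D2[of v y], of c] by (simp add: linear_scale[OF linD])
    then show ?thesis using D2[of "c *\<^sub>R v" y] has_derivative_unique by blast
  qed
  have linD2v: "linear (\<lambda>v. D2 v y w)" for y w
    by (rule linearI) (simp_all add: D2add D2scale)
  define f1 where "f1 x e t = cos t * D (geod x e t) e - sin t * D (geod x e t) x" for x e t
  define s where "s x e = D2 e x e - D x x" for x e
  have d1: "((\<lambda>t. p (geod x e t)) has_real_derivative f1 x e t) (at t)" for x e t
  proof -
    have "((\<lambda>t. p (geod x e t)) has_real_derivative D (geod x e t) (- sin t *\<^sub>R x + cos t *\<^sub>R e)) (at t)"
      by (rule chain_curve[OF D geod_vd])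
    moreover have "D (geod x e t) (- sin t *\<^sub>R x + cos t *\<^sub>R e) = f1 x e t"
      by (simp add: f1_def linear_diff[OF linD] linear_scale[OF linD])
    ultimately show ?thesis by simp
  qed
  have d2: "(f1 x e has_real_derivative s x e) (at 0)" for x e
  proof -
    have q: "((\<lambda>t. D (geod x e t) v) has_real_derivative D2 v (geod x e t) (- sin t *\<^sub>R x + cos t *\<^sub>R e)) (at t)" for v t
      by (rule chain_curve[OF D2 geod_vd])
    note DERIV_diff[OF DERIV_mult[OF DERIV_cos q[of e 0]] DERIV_mult[OF DERIV_sin q[of x 0]]]
    then have "(f1 x e has_real_derivative (- sin 0 * D (geod x e 0) e + cos 0 * D2 e (geod x e 0) (- sin 0 *\<^sub>R x + cos 0 *\<^sub>R e))
      - (cos 0 * D (geod x e 0) x + sin 0 * D2 x (geod x e 0) (- sin 0 *\<^sub>R x + cos 0 *\<^sub>R e))) (at 0)"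
      unfolding f1_def[abs_def] by (simp add: algebra_simps)
    then show ?thesis by (simp add: s_def)
  qed
  have tr: "(\<Sum>e\<in>tangent_onb x. s x e) = - (real k * (real k + real DIM('a) - 2)) * p x"
    if x1: "norm x = 1" for x
  proof -
    have x0: "x \<noteq> 0" using x1 by auto
    note T = tangent_onb_props[OF x0]
    have line: "((\<lambda>t. g (a + t *\<^sub>R v)) has_real_derivative G (a + t *\<^sub>R v) v) (at t)"
      if "\<And>y. (g has_derivative G y) (at y)" for g :: "'a \<Rightarrow> real" and G a v t
      by (rule chain_curve[OF that line_vd])
    have hom': "p (0 + t *\<^sub>R x) = t ^ k * p x" for t
      using hom by (simp add: homogeneous_deg_def)
    have pw: "((\<lambda>t. t ^ k * p x) has_real_derivative real k * t ^ (k - 1) * p x) (at t)" for t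
      by (auto intro!: derivative_eq_intros)
    have eul_t: "D (t *\<^sub>R x) x = real k * t ^ (k - 1) * p x" for t
    proof -
      have "((\<lambda>t. t ^ k * p x) has_real_derivative D (0 + t *\<^sub>R x) x) (at t)"
        using line[OF D, of 0 x t] by (simp only: hom')
      then show ?thesis using pw[of t] DERIV_unique by fastforce
    qed
    then have eul: "D x x = real k * p x" using eul_t[of 1] by simp
    have pw2: "((\<lambda>t. real k * t ^ (k - 1) * p x) has_real_derivative real k * (real (k - 1) * 1 ^ (k - 1 - 1)) * p x) (at 1)"
      by (auto intro!: derivative_eq_intros)
    have eul2: "D2 x x x = real k * real (k - 1) * p x"
    proof -
      have "((\<lambda>t. D (0 + t *\<^sub>R x) x) has_real_derivative D2 x (0 + 1 *\<^sub>R x) x) (at 1)"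
        by (rule line[OF D2])
      then have "((\<lambda>t. real k * t ^ (k - 1) * p x) has_real_derivative D2 x x x) (at 1)"
        using eul_t by simp
      then show ?thesis using pw2 DERIV_unique by fastforce
    qed
    have lap: "(\<Sum>b\<in>Basis. D2 b x b) = 0"
    proof -
      have "euclid_laplacian p x = (\<Sum>b\<in>Basis. D2 b x b)"
        unfolding euclid_laplacian_def
      proof (rule sum.cong[OF refl])
        fix b :: 'a
        have "deriv (\<lambda>s. p (x + s *\<^sub>R b)) t = D (x + t *\<^sub>R b) b" for t
          by (rule DERIV_imp_deriv[OF line[OF D]])
        then have "(\<lambda>t. deriv (\<lambda>s. p (x + s *\<^sub>R b)) t) = (\<lambda>t. D (x + t *\<^sub>R b) b)" by auto
        moreover have "deriv (\<lambda>t. D (x + t *\<^sub>R b) b) 0 = D2 b x b"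
        proof -
          have "((\<lambda>t. D (x + t *\<^sub>R b) b) has_real_derivative D2 b (x + 0 *\<^sub>R b) b) (at 0)"
            by (rule line[OF D2])
          then show ?thesis using DERIV_imp_deriv by fastforce
        qed
        ultimately show "deriv (\<lambda>t. deriv (\<lambda>s. p (x + s *\<^sub>R b)) t) 0 = D2 b x b" by simp
      qed
      then show ?thesis using harm by simp
    qed
    let ?B = "insert x (tangent_onb x)"
    have xT: "x \<notin> tangent_onb x" using T(1) x1 by (auto simp: norm_eq_1)
    have Bfin: "finite ?B" using T(5) by simp
    have Bpw: "pairwise orthogonal ?B"
      using T(1,2) by (auto simp: pairwise_insert orthogonal_def inner_commute)
    have Bn: "\<forall>e\<in>?B. norm e = 1" using T(3) x1 by auto
    have Bspan: "span ?B = UNIV"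
    proof -
      have "v \<in> span ?B" for v
      proof -
        have "v - (v \<bullet> x) *\<^sub>R x \<in> span (tangent_onb x)"
          using T(4) x1 by (simp add: inner_diff_left norm_eq_1)
        then have "v - (v \<bullet> x) *\<^sub>R x \<in> span ?B" using span_mono[of "tangent_onb x" ?B] by auto
        moreover have "(v \<bullet> x) *\<^sub>R x \<in> span ?B" by (intro span_mul span_base) simp
        ultimately have "(v - (v \<bullet> x) *\<^sub>R x) + (v \<bullet> x) *\<^sub>R x \<in> span ?B" by (rule span_add)
        then show ?thesis by simp
      qed
      then show ?thesis by auto
    qed
    have "(\<Sum>b\<in>Basis. D2 b x b) = (\<Sum>e\<in>?B. D2 e x e)"
      by (rule trace_onb[OF linD2 linD2v Bfin Bpw Bn Bspan])
    also have "\<dots> = D2 x x x + (\<Sum>e\<in>tangent_onb x. D2 e x e)"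
      using T(5) xT by simp
    finally have sT: "(\<Sum>e\<in>tangent_onb x. D2 e x e) = - (real k * real (k - 1) * p x)"
      using lap eul2 by simp
    have "(\<Sum>e\<in>tangent_onb x. s x e) = (\<Sum>e\<in>tangent_onb x. D2 e x e) - real (card (tangent_onb x)) * D x x"
      by (simp add: s_def sum_subtractf)
    also have "\<dots> = - (real k * real (k - 1) * p x) - real (DIM('a) - 1) * (real k * p x)"
      using sT T(6) eul by simp
    also have "\<dots> = - (real k * (real k + real DIM('a) - 2)) * p x"
    proof -
      have e1: "real (DIM('a) - 1) = real DIM('a) - 1" using DIM_positive[where 'a='a]
        by (simp add: of_nat_diff)
      have e2: "real k * real (k - 1) * p x = real k * (real k - 1) * p x"
        by (cases k) auto
      show ?thesis unfolding e1 e2 by (simp add: algebra_simps)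
    qed
    finally show ?thesis .
  qed
  show ?thesis
    by (intro exI[of _ f1] exI[of _ s]) (use d1 d2 tr in blast)
qed

lemma scaleR_vd:
  assumes "(h has_real_derivative h') (at t)"
  shows "((\<lambda>t. h t *\<^sub>R (b::'b::real_normed_vector)) has_vector_derivative h' *\<^sub>R b) (at t)"
  using has_vector_derivative_scaleR[OF assms has_vector_derivative_const[of b]] by simp

lemma form_geod:
  fixes F :: "'a::euclidean_space \<Rightarrow> 'b::euclidean_space"
  assumes "harmonic_form k F"
  shows "\<exists>V1 V2. (\<forall>x e t. ((\<lambda>t. F (geod x e t)) has_vector_derivative V1 x e t) (at t)) \<and>
     (\<forall>x e. (V1 x e has_vector_derivative V2 x e) (at 0)) \<and>
     (\<forall>x. norm x = 1 \<longrightarrow> (\<Sum>e\<in>tangent_onb x. V2 x e) = - (real k * (real k + real DIM('a) - 2)) *\<^sub>R F x)"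
proof -
  let ?L = "real k * (real k + real DIM('a) - 2)"
  have "\<forall>b\<in>Basis. \<exists>f1 s. (\<forall>x e t. ((\<lambda>t. F (geod x e t) \<bullet> b) has_real_derivative f1 x e t) (at t)) \<and>
     (\<forall>x e. (f1 x e has_real_derivative s x e) (at 0)) \<and>
     (\<forall>x. norm x = 1 \<longrightarrow> (\<Sum>e\<in>tangent_onb x. s x e) = - ?L * (F x \<bullet> b))"
  proof
    fix b :: 'b assume b: "b \<in> Basis"
    show "\<exists>f1 s. (\<forall>x e t. ((\<lambda>t. F (geod x e t) \<bullet> b) has_real_derivative f1 x e t) (at t)) \<and>
     (\<forall>x e. (f1 x e has_real_derivative s x e) (at 0)) \<and>
     (\<forall>x. norm x = 1 \<longrightarrow> (\<Sum>e\<in>tangent_onb x. s x e) = - ?L * (F x \<bullet> b))"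
      by (rule poly_geod[of "\<lambda>y. F y \<bullet> b" k]) (use assms b in \<open>auto simp: harmonic_form_def\<close>)
  qed
  then obtain f1 s where fs: "\<And>b. b \<in> Basis \<Longrightarrow> (\<forall>x e t. ((\<lambda>t. F (geod x e t) \<bullet> b) has_real_derivative f1 b x e t) (at t)) \<and>
     (\<forall>x e. (f1 b x e has_real_derivative s b x e) (at 0)) \<and>
     (\<forall>x. norm x = 1 \<longrightarrow> (\<Sum>e\<in>tangent_onb x. s b x e) = - ?L * (F x \<bullet> b))"
    by metis
  define V1 where "V1 x e t = (\<Sum>b\<in>Basis. f1 b x e t *\<^sub>R b)" for x e t
  define V2 where "V2 x e = (\<Sum>b\<in>Basis. s b x e *\<^sub>R b)" for x e
  have rep: "(\<lambda>t. F (geod x e t)) = (\<lambda>t. \<Sum>b\<in>Basis. (F (geod x e t) \<bullet> b) *\<^sub>R b)" for x e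
    by (simp add: euclidean_representation)
  have d1: "((\<lambda>t. F (geod x e t)) has_vector_derivative V1 x e t) (at t)" for x e t
    unfolding rep V1_def
    by (intro has_vector_derivative_sum scaleR_vd) (use fs in blast)
  have d2: "(V1 x e has_vector_derivative V2 x e) (at 0)" for x e
    unfolding V1_def[abs_def] V2_def
    by (intro has_vector_derivative_sum scaleR_vd) (use fs in blast)
  have tr: "(\<Sum>e\<in>tangent_onb x. V2 x e) = - ?L *\<^sub>R F x" if "norm x = 1" for x
  proof -
    have "(\<Sum>e\<in>tangent_onb x. V2 x e) = (\<Sum>b\<in>Basis. (\<Sum>e\<in>tangent_onb x. s b x e) *\<^sub>R b)"
      unfolding V2_def by (subst sum.swap) (simp add: scaleR_sum_left)
    also have "\<dots> = (\<Sum>b\<in>Basis. (- ?L * (F x \<bullet> b)) *\<^sub>R b)"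
      by (rule sum.cong[OF refl]) (use fs that in simp)
    also have "\<dots> = (- ?L) *\<^sub>R (\<Sum>b\<in>Basis. (F x \<bullet> b) *\<^sub>R b)"
      by (simp only: scaleR_sum_right scaleR_scaleR)
    also have "\<dots> = - ?L *\<^sub>R F x"
      by (simp add: euclidean_representation)
    finally show ?thesis .
  qed
  show ?thesis by (intro exI[of _ V1] exI[of _ V2]) (use d1 d2 tr in blast)
qed

lemma inner_rd:
  fixes f g :: "real \<Rightarrow> 'b::real_inner"
  assumes "(f has_vector_derivative f') (at t)" "(g has_vector_derivative g') (at t)"
  shows "((\<lambda>t. f t \<bullet> g t) has_real_derivative (f t \<bullet> g' + f' \<bullet> g t)) (at t)"
proof -
  have "((\<lambda>t. f t \<bullet> g t) has_derivative (\<lambda>h. f t \<bullet> (h *\<^sub>R g') + (h *\<^sub>R f') \<bullet> g t)) (at t)"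
    using assms by (intro has_derivative_inner) (auto simp: has_vector_derivative_def)
  moreover have "(\<lambda>h. f t \<bullet> (h *\<^sub>R g') + (h *\<^sub>R f') \<bullet> g t) = (*) (f t \<bullet> g' + f' \<bullet> g t)"
    by (auto simp: algebra_simps)
  ultimately show ?thesis by (simp add: has_field_derivative_def)
qed

lemma const_norm_curve:
  fixes g :: "real \<Rightarrow> 'b::real_inner"
  assumes d1: "\<And>t. (g has_vector_derivative gd t) (at t)" and d2: "(gd has_vector_derivative gdd) (at 0)"
    and c: "\<And>t. g t \<bullet> g t = c"
  shows "g t \<bullet> gd t = 0" "gd 0 \<bullet> gd 0 + g 0 \<bullet> gdd = 0"
proof -
  have o: "g t \<bullet> gd t = 0" for t
  proof -
    have "((\<lambda>t. g t \<bullet> g t) has_real_derivative (g t \<bullet> gd t + gd t \<bullet> g t)) (at t)"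
      by (rule inner_rd[OF d1 d1])
    moreover have "((\<lambda>t. g t \<bullet> g t) has_real_derivative 0) (at t)"
      using c by simp
    ultimately have "g t \<bullet> gd t + gd t \<bullet> g t = 0" using DERIV_unique by blast
    then show ?thesis by (simp add: inner_commute)
  qed
  then show "g t \<bullet> gd t = 0" .
  have "((\<lambda>t. g t \<bullet> gd t) has_real_derivative (g 0 \<bullet> gdd + gd 0 \<bullet> gd 0)) (at 0)"
    by (rule inner_rd[OF d1 d2])
  moreover have "((\<lambda>t. g t \<bullet> gd t) has_real_derivative 0) (at 0)"
    using o by simp
  ultimately show "gd 0 \<bullet> gd 0 + g 0 \<bullet> gdd = 0" using DERIV_unique by fastforce
qed

lemma geod_sphere:
  fixes x e :: "'a::real_inner"
  assumes "norm x = 1" "norm e = 1" "e \<bullet> x = 0"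
  shows "norm (geod x e t) = 1"
proof -
  have "geod x e t \<bullet> geod x e t = (cos t)\<^sup>2 + (sin t)\<^sup>2"
    using assms by (simp add: geod_def inner_add_left inner_add_right inner_commute norm_eq_1 power2_eq_square)
  then show ?thesis by (simp add: norm_eq_1)
qed

lemma tproj_sum: "tproj p (sum f A) = (\<Sum>a\<in>A. tproj p (f a))"
  by (simp add: tproj_def sum_subtractf inner_sum_left scaleR_sum_left)

lemma final_alg:
  fixes r1 r2 L1 L2 E a b c \<alpha> \<beta> :: real
  assumes r: "r1 > 0" "r2 > 0" "r1\<^sup>2 + r2\<^sup>2 = 1"
    and E: "E = L1*r1\<^sup>2 + L2*r2\<^sup>2" and a: "a = E - L1" and b: "b = E - L2"
    and c: "c = - a*L1*r1\<^sup>2 - b*L2*r2\<^sup>2" and al: "\<alpha> = -a*L1 - c + E*a" and be: "\<beta> = -b*L2 - c + E*b"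
  shows "(\<alpha> = 0 \<and> \<beta> = 0 \<and> \<not>(a = 0 \<and> b = 0)) \<longleftrightarrow> (r1 = 1/sqrt 2 \<and> r2 = 1/sqrt 2 \<and> L1 \<noteq> L2)"
proof -
  have a': "a = r2\<^sup>2 * (L2 - L1)" using a E r(3) by algebra
  have b': "b = r1\<^sup>2 * (L1 - L2)" using b E r(3) by algebra
  have al': "\<alpha> = r2\<^sup>2 * (L2 - L1)\<^sup>2 * (r2\<^sup>2 - r1\<^sup>2)" using al c a b E r(3) by algebra
  have be': "\<beta> = r1\<^sup>2 * (L1 - L2)\<^sup>2 * (r1\<^sup>2 - r2\<^sup>2)" using be c a b E r(3) by algebra
  have ab0: "(a = 0 \<and> b = 0) \<longleftrightarrow> L1 = L2" using a' b' r by auto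
  have rr: "r1\<^sup>2 = r2\<^sup>2 \<longleftrightarrow> (r1 = 1/sqrt 2 \<and> r2 = 1/sqrt 2)"
  proof
    assume h: "r1\<^sup>2 = r2\<^sup>2"
    then have "r1\<^sup>2 = 1/2" "r2\<^sup>2 = 1/2" using r(3) by auto
    then have "sqrt (1/2) = r1" "sqrt (1/2) = r2" using r(1,2) by (auto intro!: real_sqrt_unique)
    then have "r1 = sqrt (1/2)" "r2 = sqrt (1/2)" by auto
    then show "r1 = 1/sqrt 2 \<and> r2 = 1/sqrt 2" by (simp add: real_sqrt_divide)
  qed simp
  show ?thesis using al' be' ab0 rr r by auto
qed

lemma L_inj:
  assumes "d \<ge> (2::nat)"
  shows "(real k1 * (real k1 + real d - 2) = real k2 * (real k2 + real d - 2)) \<longleftrightarrow> k1 = k2"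
proof
  assume h: "real k1 * (real k1 + real d - 2) = real k2 * (real k2 + real d - 2)"
  have "real k2 * (real k2 + real d - 2) - real k1 * (real k1 + real d - 2)
      = (real k2 - real k1) * (real k1 + real k2 + real d - 2)" by algebra
  then have "(real k2 - real k1) * (real k1 + real k2 + real d - 2) = 0" using h by simp
  moreover have "real d \<ge> 2" using assms by simp
  ultimately show "k1 = k2"
    by (cases "k1 = 0 \<and> k2 = 0") (auto simp: add_pos_nonneg)
qed simp

lemma cmul_vd:
  assumes "(f has_vector_derivative f') (at t)"
  shows "((\<lambda>t. c *\<^sub>R f t) has_vector_derivative c *\<^sub>R f') (at t)"
  using has_vector_derivative_scaleR[OF DERIV_const[of c] assms] by simp

lemma pair_sum: "(\<Sum>e\<in>A. (f e, g e)) = (\<Sum>e\<in>A. f e, \<Sum>e\<in>A. g e)"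
  by (simp add: prod_eq_iff fst_sum snd_sum)

theorem mainTheorem8:
  fixes F1 :: "'a::euclidean_space \<Rightarrow> 'b::euclidean_space"
    and F2 :: "'a \<Rightarrow> 'c::euclidean_space"
    and k1 k2 :: nat and r1 r2 :: real
  assumes "DIM('a) \<ge> 2"
    and "r1 > 0" and "r2 > 0" and "r1\<^sup>2 + r2\<^sup>2 = 1"
    and "harmonic_form k1 F1" and "harmonic_form k2 F2"
    and "\<forall>x. (norm (F1 x))\<^sup>2 = r1\<^sup>2 * norm x ^ (2 * k1)"
    and "\<forall>x. (norm (F2 x))\<^sup>2 = r2\<^sup>2 * norm x ^ (2 * k2)"
  shows "proper_biharmonic (\<lambda>x. (F1 x, F2 x)) \<longleftrightarrow>
           r1 = 1 / sqrt 2 \<and> r2 = 1 / sqrt 2 \<and> k1 \<noteq> k2"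
proof -
  define L1 where "L1 = real k1 * (real k1 + real DIM('a) - 2)"
  define L2 where "L2 = real k2 * (real k2 + real DIM('a) - 2)"
  obtain V1 W1 where V1: "\<And>x e t. ((\<lambda>t. F1 (geod x e t)) has_vector_derivative V1 x e t) (at t)"
    and W1: "\<And>x e. (V1 x e has_vector_derivative W1 x e) (at 0)"
    and S1: "\<And>x. norm x = 1 \<Longrightarrow> (\<Sum>e\<in>tangent_onb x. W1 x e) = - L1 *\<^sub>R F1 x"
    using form_geod[OF assms(5)] unfolding L1_def by blast
  obtain V2 W2 where V2: "\<And>x e t. ((\<lambda>t. F2 (geod x e t)) has_vector_derivative V2 x e t) (at t)"
    and W2: "\<And>x e. (V2 x e has_vector_derivative W2 x e) (at 0)"
    and S2: "\<And>x. norm x = 1 \<Longrightarrow> (\<Sum>e\<in>tangent_onb x. W2 x e) = - L2 *\<^sub>R F2 x"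
    using form_geod[OF assms(6)] unfolding L2_def by blast
  define \<phi> where "\<phi> = (\<lambda>x. (F1 x, F2 x))"
  define E where "E = L1*r1\<^sup>2 + L2*r2\<^sup>2"
  define a where "a = E - L1"
  define b where "b = E - L2"
  define c where "c = - a*L1*r1\<^sup>2 - b*L2*r2\<^sup>2"
  define \<alpha> where "\<alpha> = -a*L1 - c + E*a"
  define \<beta> where "\<beta> = -b*L2 - c + E*b"
  have n1: "F1 y \<bullet> F1 y = r1\<^sup>2" if "norm y = 1" for y
    using assms(7) that by (simp flip: power2_norm_eq_inner)
  have n2: "F2 y \<bullet> F2 y = r2\<^sup>2" if "norm y = 1" for y
    using assms(8) that by (simp flip: power2_norm_eq_inner)
  have vdphi: "vector_derivative (\<lambda>s. \<phi> (geod x e s)) (at t) = (V1 x e t, V2 x e t)" for x e t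
    unfolding \<phi>_def by (rule vector_derivative_at[OF has_vector_derivative_Pair[OF V1 V2]])
  have dm: "dmap \<phi> x e = (V1 x e 0, V2 x e 0)" for x e
    unfolding dmap_def vdphi ..
  have sa: "second_along \<phi> x e = (W1 x e, W2 x e)" for x e
  proof -
    have "(\<lambda>t. vector_derivative (\<lambda>s. \<phi> (geod x e s)) (at t)) = (\<lambda>t. (V1 x e t, V2 x e t))"
      using vdphi by auto
    then show ?thesis
      unfolding second_along_def
      using vector_derivative_at[OF has_vector_derivative_Pair[OF W1 W2]] by simp
  qed
  have tau: "tension \<phi> y = (a *\<^sub>R F1 y, b *\<^sub>R F2 y)" if y: "norm y = 1" for y
  proof -
    have "tension \<phi> y = tproj (\<phi> y) (\<Sum>e\<in>tangent_onb y. (W1 y e, W2 y e))"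
      unfolding tension_def sa tproj_sum ..
    also have "\<dots> = tproj (F1 y, F2 y) (- L1 *\<^sub>R F1 y, - L2 *\<^sub>R F2 y)"
      unfolding pair_sum S1[OF y] S2[OF y] \<phi>_def ..
    also have "\<dots> = (a *\<^sub>R F1 y, b *\<^sub>R F2 y)"
      using n1[OF y] n2[OF y]
      by (simp add: tproj_def a_def b_def E_def algebra_simps)
    finally show ?thesis .
  qed
  have bit: "bitension \<phi> x = (\<alpha> *\<^sub>R F1 x, \<beta> *\<^sub>R F2 x)" if x: "norm x = 1" for x
  proof -
    have x0': "x \<noteq> 0" using x by auto
    note Tx = tangent_onb_props[OF x0']
    have eT: "norm e = 1" "e \<bullet> x = 0" if "e \<in> tangent_onb x" for e
      using Tx(1,3) that by auto
    have sph: "norm (geod x e s) = 1" if "e \<in> tangent_onb x" for e s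
      using geod_sphere[OF x eT[OF that]] .
    have o1: "F1 (geod x e t) \<bullet> V1 x e t = 0" "V1 x e 0 \<bullet> V1 x e 0 + F1 x \<bullet> W1 x e = 0"
      if "e \<in> tangent_onb x" for e t
      using const_norm_curve[where g="\<lambda>t. F1 (geod x e t)" and gd="V1 x e" and gdd="W1 x e" and c="r1\<^sup>2", OF V1 W1] n1 sph[OF that] by auto
    have o2: "F2 (geod x e t) \<bullet> V2 x e t = 0" "V2 x e 0 \<bullet> V2 x e 0 + F2 x \<bullet> W2 x e = 0"
      if "e \<in> tangent_onb x" for e t
      using const_norm_curve[where g="\<lambda>t. F2 (geod x e t)" and gd="V2 x e" and gdd="W2 x e" and c="r2\<^sup>2", OF V2 W2] n2 sph[OF that] by auto
    have cov: "covd_along \<phi> (tension \<phi>) x e = (\<lambda>t. (a *\<^sub>R V1 x e t, b *\<^sub>R V2 x e t))"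
      if e: "e \<in> tangent_onb x" for e
    proof
      fix t
      have "(\<lambda>s. tension \<phi> (geod x e s)) = (\<lambda>s. (a *\<^sub>R F1 (geod x e s), b *\<^sub>R F2 (geod x e s)))"
        using tau sph[OF e] by auto
      then have "vector_derivative (\<lambda>s. tension \<phi> (geod x e s)) (at t) = (a *\<^sub>R V1 x e t, b *\<^sub>R V2 x e t)"
        using vector_derivative_at[OF has_vector_derivative_Pair[OF cmul_vd[OF V1] cmul_vd[OF V2]]] by simp
      then show "covd_along \<phi> (tension \<phi>) x e t = (a *\<^sub>R V1 x e t, b *\<^sub>R V2 x e t)"
        unfolding covd_along_def using o1(1)[OF e, of t] o2(1)[OF e, of t]
        by (simp add: tproj_def \<phi>_def inner_commute)
    qed
    have "rough_trace \<phi> (tension \<phi>) x = (\<Sum>e\<in>tangent_onb x. tproj (\<phi> x) (a *\<^sub>R W1 x e, b *\<^sub>R W2 x e))"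
      unfolding rough_trace_def
    proof (rule sum.cong[OF refl])
      fix e assume e: "e \<in> tangent_onb x"
      show "tproj (\<phi> x) (vector_derivative (covd_along \<phi> (tension \<phi>) x e) (at 0)) = tproj (\<phi> x) (a *\<^sub>R W1 x e, b *\<^sub>R W2 x e)"
        unfolding cov[OF e]
        using vector_derivative_at[OF has_vector_derivative_Pair[OF cmul_vd[OF W1] cmul_vd[OF W2]]] by simp
    qed
    also have "\<dots> = tproj (F1 x, F2 x) (a *\<^sub>R (- L1 *\<^sub>R F1 x), b *\<^sub>R (- L2 *\<^sub>R F2 x))"
      unfolding tproj_sum[symmetric] pair_sum scaleR_sum_right[symmetric] S1[OF x] S2[OF x] \<phi>_def ..
    finally have rt: "rough_trace \<phi> (tension \<phi>) x = tproj (F1 x, F2 x) (a *\<^sub>R (- L1 *\<^sub>R F1 x), b *\<^sub>R (- L2 *\<^sub>R F2 x))" .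
    have "(\<Sum>e\<in>tangent_onb x. sphere_curv (dmap \<phi> x e) (tension \<phi> x) (dmap \<phi> x e))
        = (\<Sum>e\<in>tangent_onb x. (- (V1 x e 0 \<bullet> V1 x e 0 + V2 x e 0 \<bullet> V2 x e 0)) *\<^sub>R (a *\<^sub>R F1 x, b *\<^sub>R F2 x))"
    proof (rule sum.cong[OF refl])
      fix e assume e: "e \<in> tangent_onb x"
      have "F1 x \<bullet> V1 x e 0 = 0" "F2 x \<bullet> V2 x e 0 = 0"
        using o1(1)[OF e, of 0] o2(1)[OF e, of 0] by simp_all
      then show "sphere_curv (dmap \<phi> x e) (tension \<phi> x) (dmap \<phi> x e) =
          (- (V1 x e 0 \<bullet> V1 x e 0 + V2 x e 0 \<bullet> V2 x e 0)) *\<^sub>R (a *\<^sub>R F1 x, b *\<^sub>R F2 x)"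
        unfolding sphere_curv_def dm tau[OF x]
        by (simp add: inner_commute) (simp add: algebra_simps)
    qed
    also have "\<dots> = (- (\<Sum>e\<in>tangent_onb x. (V1 x e 0 \<bullet> V1 x e 0 + V2 x e 0 \<bullet> V2 x e 0))) *\<^sub>R (a *\<^sub>R F1 x, b *\<^sub>R F2 x)"
      by (subst sum_negf[symmetric]) (rule scaleR_sum_left[symmetric])
    also have "(\<Sum>e\<in>tangent_onb x. (V1 x e 0 \<bullet> V1 x e 0 + V2 x e 0 \<bullet> V2 x e 0))
        = (\<Sum>e\<in>tangent_onb x. - (F1 x \<bullet> W1 x e) - F2 x \<bullet> W2 x e)"
    proof (rule sum.cong[OF refl])
      fix e assume e: "e \<in> tangent_onb x"
      show "V1 x e 0 \<bullet> V1 x e 0 + V2 x e 0 \<bullet> V2 x e 0 = - (F1 x \<bullet> W1 x e) - F2 x \<bullet> W2 x e"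
        using o1(2)[OF e] o2(2)[OF e] by linarith
    qed
    also have "\<dots> = - (F1 x \<bullet> (\<Sum>e\<in>tangent_onb x. W1 x e)) - F2 x \<bullet> (\<Sum>e\<in>tangent_onb x. W2 x e)"
      by (simp add: sum_subtractf sum_negf inner_sum_right)
    also have "\<dots> = E"
      unfolding S1[OF x] S2[OF x] using n1[OF x] n2[OF x] by (simp add: E_def)
    finally have cu: "(\<Sum>e\<in>tangent_onb x. sphere_curv (dmap \<phi> x e) (tension \<phi> x) (dmap \<phi> x e))
        = (- E) *\<^sub>R (a *\<^sub>R F1 x, b *\<^sub>R F2 x)" .
    show ?thesis
      unfolding bitension_def rt cu
      using n1[OF x] n2[OF x]
      by (simp add: tproj_def \<alpha>_def \<beta>_def c_def algebra_simps)
  qed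
  obtain x0 :: 'a where x0: "norm x0 = 1"
  proof -
    have "(SOME b. b \<in> (Basis :: 'a set)) \<in> Basis"
      by (rule someI_ex) (use nonempty_Basis in blast)
    then show ?thesis using that norm_Basis by blast
  qed
  have F10: "F1 x0 \<noteq> 0" using n1[OF x0] assms(2) by auto
  have F20: "F2 x0 \<noteq> 0" using n2[OF x0] assms(3) by auto
  have T: "(\<forall>x\<in>sphere 0 1. tension \<phi> x = 0) \<longleftrightarrow> (a = 0 \<and> b = 0)"
  proof
    assume "\<forall>x\<in>sphere 0 1. tension \<phi> x = 0"
    then have "tension \<phi> x0 = 0" using x0 by simp
    then show "a = 0 \<and> b = 0" using tau[OF x0] F10 F20 by (simp add: zero_prod_def)
  qed (use tau in \<open>simp add: zero_prod_def\<close>)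
  have B: "(\<forall>x\<in>sphere 0 1. bitension \<phi> x = 0) \<longleftrightarrow> (\<alpha> = 0 \<and> \<beta> = 0)"
  proof
    assume "\<forall>x\<in>sphere 0 1. bitension \<phi> x = 0"
    then have "bitension \<phi> x0 = 0" using x0 by simp
    then show "\<alpha> = 0 \<and> \<beta> = 0" using bit[OF x0] F10 F20 by (simp add: zero_prod_def)
  qed (use bit in \<open>simp add: zero_prod_def\<close>)
  have "proper_biharmonic \<phi> \<longleftrightarrow> (\<alpha> = 0 \<and> \<beta> = 0 \<and> \<not>(a = 0 \<and> b = 0))"
    unfolding proper_biharmonic_def T B by blast
  also have "\<dots> \<longleftrightarrow> (r1 = 1/sqrt 2 \<and> r2 = 1/sqrt 2 \<and> L1 \<noteq> L2)"
    by (rule final_alg[OF assms(2,3,4) E_def a_def b_def c_def \<alpha>_def \<beta>_def])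
  also have "\<dots> \<longleftrightarrow> (r1 = 1/sqrt 2 \<and> r2 = 1/sqrt 2 \<and> k1 \<noteq> k2)"
    using L_inj[OF assms(1), of k1 k2] unfolding L1_def L2_def by blast
  finally show ?thesis unfolding \<phi>_def .
qed

end
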